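(* Let $M$ be a holomorphic hypersurface of a Kähler manifold with Norden metric $(M',g,J)$ of dimension $2n+2$, and let $p\in M$. If there exists a nonzero vector $\eta$ normal to $M$ at $p$ such that $$A_\eta=\frac{\operatorname{trace}A_\eta}{2n}\,I-\frac{\operatorname{trace}(A_\eta\circ J)}{2n}\,J,$$ then $\sigma(x,y)=g(x,y)H-\tilde g(x,y)JH$ for all $x,y\in T_pM$.
   Context: A Kähler manifold with Norden metric: manifold $M'$ with almost complex structure $J$, pseudo-Riemannian metric $g$ with $g(JX,JY)=-g(X,Y)$ and $\nabla'J=0$; $\tilde g(X,Y)=g(JX,Y)$. A holomorphic hypersurface is a $2n$-dimensional submanifold $M$ with $J(T_pM)=T_pM$ and $g|_{T_pM}$ nondegenerate, with induced Levi-Civita connection $\nabla$; its second fundamental form $\sigma$ is defined by $\nabla'_XY=\nabla_XY+\sigma(X,Y)$ and its mean curvature vector is $H=\frac1{2n}\operatorname{trace}_g\sigma$. For a vector $\eta$ normal to $M$ at $p$, $A_\eta$ is the endomorphism of $T_pM$ with $g(A_\eta x,y)=g(\sigma(x,y),\eta)$; $I$ is the identity. *)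

theory Defs
  imports "HOL-Analysis.Analysis"
begin

text \<open>The tangent space of the ambient
Kaehler manifold with Norden metric at p is a real vector space V of dimension
2n+2 (a type of class euclidean_space, only its real vector space structure is
used), with the metric g and the almost complex structure J at p.  T_pM is a
subspace W of V.\<close>

definition norden_space :: "('v::real_vector \<Rightarrow> 'v \<Rightarrow> real) \<Rightarrow> ('v \<Rightarrow> 'v) \<Rightarrow> bool" where
  "norden_space g J \<longleftrightarrow>
     bilinear g \<and> (\<forall>x y. g x y = g y x) \<and> (\<forall>x. (\<forall>y. g x y = 0) \<longrightarrow> x = 0) \<and>
     linear J \<and> (\<forall>x. J (J x) = - x) \<and> (\<forall>x y. g (J x) (J y) = - g x y)"

definition assoc_metric :: "('v \<Rightarrow> 'v \<Rightarrow> real) \<Rightarrow> ('v \<Rightarrow> 'v) \<Rightarrow> 'v \<Rightarrow> 'v \<Rightarrow> real" where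
  "assoc_metric g J x y = g (J x) y"

definition holomorphic_nondeg_subspace ::
  "('v::real_vector \<Rightarrow> 'v \<Rightarrow> real) \<Rightarrow> ('v \<Rightarrow> 'v) \<Rightarrow> 'v set \<Rightarrow> bool" where
  "holomorphic_nondeg_subspace g J W \<longleftrightarrow>
     subspace W \<and> J ` W = W \<and> (\<forall>x\<in>W. (\<forall>y\<in>W. g x y = 0) \<longrightarrow> x = 0)"

definition normal_to :: "('v \<Rightarrow> 'v \<Rightarrow> real) \<Rightarrow> 'v set \<Rightarrow> 'v \<Rightarrow> bool" where
  "normal_to g W \<eta> \<longleftrightarrow> (\<forall>x\<in>W. g \<eta> x = 0)"

definition bilinear_on :: "'v::real_vector set \<Rightarrow> ('v \<Rightarrow> 'v \<Rightarrow> 'w::real_vector) \<Rightarrow> bool" where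
  "bilinear_on W f \<longleftrightarrow>
     (\<forall>x\<in>W. \<forall>y\<in>W. \<forall>z\<in>W. \<forall>a b. f (a *\<^sub>R x + b *\<^sub>R y) z = a *\<^sub>R f x z + b *\<^sub>R f y z
                                 \<and> f z (a *\<^sub>R x + b *\<^sub>R y) = a *\<^sub>R f z x + b *\<^sub>R f z y)"

text \<open>Second fundamental form at p: a symmetric bilinear map on T_pM with values
in the normal space, satisfying sigma(x,Jy) = J sigma(x,y) (which is what the
Kaehler condition nabla' J = 0 together with the Gauss formula give for a
holomorphic submanifold).\<close>
definition second_fundamental_form ::
  "('v::real_vector \<Rightarrow> 'v \<Rightarrow> real) \<Rightarrow> ('v \<Rightarrow> 'v) \<Rightarrow> 'v set \<Rightarrow> ('v \<Rightarrow> 'v \<Rightarrow> 'v) \<Rightarrow> bool" where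
  "second_fundamental_form g J W \<sigma> \<longleftrightarrow>
     bilinear_on W \<sigma> \<and> (\<forall>x\<in>W. \<forall>y\<in>W. \<sigma> x y = \<sigma> y x) \<and>
     (\<forall>x\<in>W. \<forall>y\<in>W. normal_to g W (\<sigma> x y)) \<and>
     (\<forall>x\<in>W. \<forall>y\<in>W. \<sigma> x (J y) = J (\<sigma> x y))"

definition trace_on :: "'v::real_vector set \<Rightarrow> ('v \<Rightarrow> 'v) \<Rightarrow> real" where
  "trace_on W f = (let B = (SOME B. B \<subseteq> W \<and> independent B \<and> span B = W)
                   in (\<Sum>b\<in>B. representation B (f b) b))"

definition pseudo_orthonormal_basis ::
  "('v::real_vector \<Rightarrow> 'v \<Rightarrow> real) \<Rightarrow> 'v set \<Rightarrow> (nat \<Rightarrow> 'v) \<Rightarrow> bool" where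
  "pseudo_orthonormal_basis g W e \<longleftrightarrow>
     (\<forall>i<dim W. e i \<in> W) \<and> span (e ` {..<dim W}) = W \<and>
     (\<forall>i<dim W. \<forall>j<dim W. i \<noteq> j \<longrightarrow> g (e i) (e j) = 0) \<and>
     (\<forall>i<dim W. g (e i) (e i) = 1 \<or> g (e i) (e i) = -1)"

text \<open>trace_g of a vector-valued bilinear form B on W:
  sum_i eps_i B(e_i,e_i) with eps_i = g(e_i,e_i) = 1/g(e_i,e_i).\<close>
definition trace_g :: "('v::real_vector \<Rightarrow> 'v \<Rightarrow> real) \<Rightarrow> 'v set \<Rightarrow> ('v \<Rightarrow> 'v \<Rightarrow> 'w::real_vector) \<Rightarrow> 'w" where
  "trace_g g W B = (let e = (SOME e. pseudo_orthonormal_basis g W e)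
                    in (\<Sum>i<dim W. g (e i) (e i) *\<^sub>R B (e i) (e i)))"

text \<open>Mean curvature vector H = (1/2n) trace_g sigma, where 2n = dim W.\<close>
definition mean_curvature :: "('v::real_vector \<Rightarrow> 'v \<Rightarrow> real) \<Rightarrow> 'v set \<Rightarrow> ('v \<Rightarrow> 'v \<Rightarrow> 'v) \<Rightarrow> 'v" where
  "mean_curvature g W \<sigma> = (1 / real (dim W)) *\<^sub>R trace_g g W \<sigma>"

definition shape_operator ::
  "('v \<Rightarrow> 'v \<Rightarrow> real) \<Rightarrow> 'v set \<Rightarrow> ('v \<Rightarrow> 'v \<Rightarrow> 'v) \<Rightarrow> 'v \<Rightarrow> 'v \<Rightarrow> 'v" where
  "shape_operator g W \<sigma> \<eta> x = (THE z. z \<in> W \<and> (\<forall>y\<in>W. g z y = g (\<sigma> x y) \<eta>))"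

end

theory Submission
  imports Defs
begin

locale nd =
  fixes g :: "'v::euclidean_space \<Rightarrow> 'v \<Rightarrow> real" and J :: "'v \<Rightarrow> 'v"
  assumes ns: "norden_space g J"
begin

lemma bil: "bilinear g" using ns by (simp add: norden_space_def)
lemma gsym: "g x y = g y x" using ns by (simp add: norden_space_def)
lemma nondeg: "(\<And>y. g x y = 0) \<Longrightarrow> x = 0" using ns by (auto simp add: norden_space_def)
lemma linJ: "linear J" using ns by (simp add: norden_space_def)
lemma JJ[simp]: "J (J x) = - x" using ns by (simp add: norden_space_def)
lemma gJJ[simp]: "g (J x) (J y) = - g x y" using ns by (simp add: norden_space_def)

lemma gladd[simp]: "g (x + y) z = g x z + g y z" by (rule bilinear_ladd[OF bil])
lemma gradd[simp]: "g x (y + z) = g x y + g x z" by (rule bilinear_radd[OF bil])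
lemma glmul[simp]: "g (c *\<^sub>R x) y = c * g x y" using bilinear_lmul[OF bil] by simp
lemma grmul[simp]: "g x (c *\<^sub>R y) = c * g x y" using bilinear_rmul[OF bil] by simp
lemma glsub[simp]: "g (x - y) z = g x z - g y z" by (rule bilinear_lsub[OF bil])
lemma grsub[simp]: "g x (y - z) = g x y - g x z" by (rule bilinear_rsub[OF bil])
lemma glneg[simp]: "g (- x) y = - g x y" by (rule bilinear_lneg[OF bil])
lemma grneg[simp]: "g x (- y) = - g x y" by (rule bilinear_rneg[OF bil])
lemma glzero[simp]: "g 0 y = 0" by (rule bilinear_lzero[OF bil])
lemma grzero[simp]: "g x 0 = 0" by (rule bilinear_rzero[OF bil])
lemma glsum: "g (sum f S) y = (\<Sum>i\<in>S. g (f i) y)"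
proof -
  have "linear (\<lambda>x. g x y)" using bil by (simp add: bilinear_def)
  from linear_sum[OF this, of f S] show ?thesis by (simp add: o_def)
qed
lemma grsum: "g y (sum f S) = (\<Sum>i\<in>S. g y (f i))"
  using glsum[of f S y] by (simp add: gsym[of y])

lemma Jadd[simp]: "J (x + y) = J x + J y" using linJ by (simp add: linear_add)
lemma Jmul[simp]: "J (c *\<^sub>R x) = c *\<^sub>R J x" using linJ by (simp add: linear_scale)
lemma Jsub[simp]: "J (x - y) = J x - J y" using linJ by (simp add: linear_diff)
lemma Jneg[simp]: "J (- x) = - J x" using linJ by (simp add: linear_neg)
lemma Jzero[simp]: "J 0 = 0" using linJ by (simp add: linear_0)

lemma gJ: "g (J x) y = g x (J y)"
proof -
  have "g (J (J x)) (J y) = - g (J x) y" by (rule gJJ)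
  then show ?thesis by simp
qed

lemma lin_g: "linear (g w)" using bil by (simp add: bilinear_def)

lemma vanish_span: "(\<And>b. b \<in> S \<Longrightarrow> g w b = 0) \<Longrightarrow> u \<in> span S \<Longrightarrow> g w u = 0"
proof -
  assume h: "\<And>b. b \<in> S \<Longrightarrow> g w b = 0" and u: "u \<in> span S"
  have "subspace {u. g w u = 0}" by (auto simp: subspace_def)
  moreover have "S \<subseteq> {u. g w u = 0}" using h by auto
  ultimately have "span S \<subseteq> {u. g w u = 0}" by (rule span_minimal[rotated])
  then show ?thesis using u by auto
qed

lemma isotropic_zero:
  assumes U: "subspace U" and nd: "\<forall>x\<in>U. (\<forall>y\<in>U. g x y = 0) \<longrightarrow> x = 0"
    and iso: "\<forall>x\<in>U. g x x = 0" and u: "u \<in> U"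
  shows "u = 0"
proof -
  have "\<forall>y\<in>U. g u y = 0"
  proof
    fix y assume y: "y \<in> U"
    have "u + y \<in> U" using U u y by (simp add: subspace_add)
    then have "g (u + y) (u + y) = 0" using iso by auto
    then have "g u u + 2 * g u y + g y y = 0" by (simp add: gsym[of y u])
    then show "g u y = 0" using iso u y by auto
  qed
  then show ?thesis using nd u by auto
qed

lemma adapted_basis:
  "subspace U \<Longrightarrow> (\<forall>x\<in>U. J x \<in> U) \<Longrightarrow> (\<forall>x\<in>U. (\<forall>y\<in>U. g x y = 0) \<longrightarrow> x = 0) \<Longrightarrow>
   \<exists>B. finite B \<and> B \<subseteq> U \<and> span B = U \<and> (\<forall>b\<in>B. \<forall>c\<in>B. b \<noteq> c \<longrightarrow> g b c = 0)
     \<and> (\<forall>b\<in>B. g b b = 1 \<or> g b b = -1) \<and> (\<forall>b\<in>B. g (J b) b = 0)"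
proof (induction "dim U" arbitrary: U rule: less_induct)
  case less
  note U = less.prems(1) and JU = less.prems(2) and ndU = less.prems(3)
  show ?case
  proof (cases "U \<subseteq> {0}")
    case True
    then have "U = {0}" using U subspace_0 by blast
    then show ?thesis by (intro exI[of _ "{}"]) auto
  next
    case False
    then obtain u where u: "u \<in> U" "u \<noteq> 0" by auto
    have "\<exists>x\<in>U. g x x \<noteq> 0"
      using isotropic_zero[OF U ndU _ u(1)] u(2) by blast
    then obtain x where x: "x \<in> U" "g x x \<noteq> 0" by blast
    define P where "P = g x x"
    define Q where "Q = g x (J x)"
    define q where "q = Complex P Q"
    have q0: "q \<noteq> 0" using x(2) by (simp add: q_def P_def complex_eq_iff)
    define w where "w = 1 / csqrt q"
    have cs: "(csqrt q)^2 = q" by (rule power2_csqrt)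
    have cs0: "csqrt q \<noteq> 0" using q0 cs by auto
    have wq: "w^2 * q = 1" unfolding w_def using cs cs0 q0
      by (simp add: power_divide) 
    define a where "a = Re w"
    define b where "b = - Im w"
    have wab: "w = Complex a (- b)" by (simp add: a_def b_def complex_eq_iff)
    have "Re (w^2 * q) = 1" "Im (w^2 * q) = 0" using wq by auto
    then have e1: "(a^2 - b^2) * P + 2*a*b*Q = 1" and e2: "(a^2-b^2)*Q - 2*a*b*P = 0"
      unfolding wab q_def by (simp_all add: power2_eq_square algebra_simps)
    define x' where "x' = a *\<^sub>R x + b *\<^sub>R J x"
    have gJx: "g (J x) x = Q" by (simp add: Q_def gsym)
    have x'U: "x' \<in> U" unfolding x'_def using U x JU
      by (simp add: subspace_add subspace_scale)
    have Jx'U: "J x' \<in> U" using JU x'U by auto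
    have g11: "g x' x' = 1"
      using e1 gJx unfolding x'_def P_def Q_def
      by (simp add: algebra_simps power2_eq_square)
    have g12: "g x' (J x') = 0"
      using e2 gJx unfolding x'_def P_def Q_def
      by (simp add: algebra_simps power2_eq_square)
    have g21: "g (J x') x' = 0" using g12 gsym by metis
    have g22: "g (J x') (J x') = -1" using g11 by simp
    define U' where "U' = {y\<in>U. g y x' = 0 \<and> g y (J x') = 0}"
    have U'sub: "subspace U'" using U unfolding U'_def subspace_def by auto
    have JU': "\<forall>y\<in>U'. J y \<in> U'"
      unfolding U'_def using JU by (auto simp: gJ)
    define pr where "pr u = u - g u x' *\<^sub>R x' + g u (J x') *\<^sub>R J x'" for u
    have prU': "pr u \<in> U'" if "u \<in> U" for u
      unfolding U'_def pr_def using that U x'U Jx'U g11 g12 g21 g22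
      by (auto simp: subspace_add subspace_diff subspace_scale gsym[of x' "J x'"])
    have decomp: "u = pr u + g u x' *\<^sub>R x' - g u (J x') *\<^sub>R J x'" for u
      unfolding pr_def by simp
    have ndU': "\<forall>y\<in>U'. (\<forall>z\<in>U'. g y z = 0) \<longrightarrow> y = 0"
    proof (intro ballI impI)
      fix y assume y: "y \<in> U'" and h: "\<forall>z\<in>U'. g y z = 0"
      have "\<forall>u\<in>U. g y u = 0"
      proof
        fix u assume u: "u \<in> U"
        have "g y u = g y (pr u) + g u x' * g y x' - g u (J x') * g y (J x')"
          by (subst decomp[of u]) simp
        also have "\<dots> = 0" using h prU'[OF u] y unfolding U'_def by auto
        finally show "g y u = 0" .
      qed
      then show "y = 0" using ndU y unfolding U'_def by auto
    qed
    have "x' \<notin> U'" using g11 unfolding U'_def by auto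
    then have "U' \<subset> U" using x'U unfolding U'_def by blast
    then have "dim U' < dim U"
      using dim_psubset[of U' U] U U'sub by (metis span_eq_iff)
    from less.hyps[OF this U'sub JU' ndU'] obtain B' where B':
      "finite B'" "B' \<subseteq> U'" "span B' = U'" "\<forall>b\<in>B'. \<forall>c\<in>B'. b \<noteq> c \<longrightarrow> g b c = 0"
      "\<forall>b\<in>B'. g b b = 1 \<or> g b b = -1" "\<forall>b\<in>B'. g (J b) b = 0" by blast
    define B where "B = insert x' (insert (J x') B')"
    have BU: "B \<subseteq> U" using B'(2) x'U Jx'U unfolding B_def U'_def by auto
    have "span B \<subseteq> U" using BU U by (simp add: span_minimal)
    moreover have "U \<subseteq> span B"
    proof
      fix u assume u: "u \<in> U"
      have "pr u \<in> span B" using prU'[OF u] B'(3) span_mono[of B' B] unfolding B_def by auto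
      moreover have "x' \<in> span B" "J x' \<in> span B" unfolding B_def by (auto intro: span_base)
      ultimately have "pr u + g u x' *\<^sub>R x' - g u (J x') *\<^sub>R J x' \<in> span B"
        by (intro span_add span_diff span_scale) auto
      then show "u \<in> span B" using decomp[of u] by simp
    qed
    ultimately have spB: "span B = U" by auto
    have B'o: "g b x' = 0" "g b (J x') = 0" "g x' b = 0" "g (J x') b = 0" if "b \<in> B'" for b
      using that B'(2) unfolding U'_def by (auto simp: gsym[of _ b])
    show ?thesis
      apply (rule exI[of _ B])
      using B' spB BU g11 g12 g21 g22 B'o
      unfolding B_def by auto
  qed
qed

lemma orth_indep:
  assumes fin: "finite B" and o: "\<forall>b\<in>B. \<forall>c\<in>B. b \<noteq> c \<longrightarrow> g b c = 0"
    and n: "\<forall>b\<in>B. g b b = 1 \<or> g b b = -1"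
  shows "independent B"
  unfolding independent_explicit
proof (intro conjI allI impI ballI fin)
  fix c v assume s: "(\<Sum>v\<in>B. c v *\<^sub>R v) = 0" and v: "v \<in> B"
  have "0 = g (\<Sum>w\<in>B. c w *\<^sub>R w) v" using s by simp
  also have "\<dots> = (\<Sum>w\<in>B. c w * g w v)" by (simp add: glsum)
  also have "\<dots> = c v * g v v + (\<Sum>w\<in>B - {v}. c w * g w v)"
    by (rule sum.remove[OF fin v])
  also have "(\<Sum>w\<in>B - {v}. c w * g w v) = 0" using o v by (intro sum.neutral) auto
  finally have "c v * g v v = 0" by simp
  then show "c v = 0" using n v by auto
qed

lemma adapted_pob:
  assumes "subspace U" "\<forall>x\<in>U. J x \<in> U" "\<forall>x\<in>U. (\<forall>y\<in>U. g x y = 0) \<longrightarrow> x = 0"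
  shows "\<exists>e. pseudo_orthonormal_basis g U e \<and> (\<forall>i<dim U. g (J (e i)) (e i) = 0)"
proof -
  obtain B where B: "finite B" "B \<subseteq> U" "span B = U" "\<forall>b\<in>B. \<forall>c\<in>B. b \<noteq> c \<longrightarrow> g b c = 0"
     "\<forall>b\<in>B. g b b = 1 \<or> g b b = -1" "\<forall>b\<in>B. g (J b) b = 0"
    using adapted_basis[OF assms] by blast
  have ind: "independent B" by (rule orth_indep[OF B(1) B(4) B(5)])
  have d: "dim U = card B" using dim_span_eq_card_independent[OF ind] B(3) by simp
  obtain h where h: "bij_betw h {0..<card B} B" using ex_bij_betw_nat_finite[OF B(1)] by blast
  have hB: "h i \<in> B" if "i < dim U" for i using bij_betwE[OF h] that d by auto
  have img: "h ` {..<dim U} = B" using h d by (simp add: bij_betw_def atLeast0LessThan)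
  have inj: "h i \<noteq> h j" if "i < dim U" "j < dim U" "i \<noteq> j" for i j
    using h that d unfolding bij_betw_def inj_on_def by (metis atLeast0LessThan lessThan_iff)
  have "pseudo_orthonormal_basis g U h"
    unfolding pseudo_orthonormal_basis_def
  proof (intro conjI allI impI)
    fix i assume "i < dim U" then show "h i \<in> U" using hB B(2) by blast
  next
    show "span (h ` {..<dim U}) = U" using img B(3) by simp
  next
    fix i j assume "i < dim U" "j < dim U" "i \<noteq> j"
    then show "g (h i) (h j) = 0" using inj hB B(4) by blast
  next
    fix i assume "i < dim U" then show "g (h i) (h i) = 1 \<or> g (h i) (h i) = -1"
      using hB B(5) by blast
  qed
  moreover have "\<forall>i<dim U. g (J (h i)) (h i) = 0" using hB B(6) by blast
  ultimately show ?thesis by blast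
qed


lemma pob_props:
  assumes "pseudo_orthonormal_basis g U e"
  shows "\<And>i. i < dim U \<Longrightarrow> e i \<in> U"
    and "span (e ` {..<dim U}) = U"
    and "\<And>i j. i < dim U \<Longrightarrow> j < dim U \<Longrightarrow> i \<noteq> j \<Longrightarrow> g (e i) (e j) = 0"
    and "\<And>i. i < dim U \<Longrightarrow> g (e i) (e i) * g (e i) (e i) = 1"
  using assms unfolding pseudo_orthonormal_basis_def by auto

lemma pob_delta:
  assumes "pseudo_orthonormal_basis g U e" "j < dim U"
  shows "(\<Sum>i<dim U. g (e i) (e i) * c i * g (e i) (e j)) = c j"
proof -
  have "(\<Sum>i<dim U. g (e i) (e i) * c i * g (e i) (e j)) =
        (\<Sum>i<dim U. if i = j then c j else 0)"
    using pob_props[OF assms(1)] assms(2)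
    by (intro sum.cong) (auto simp: algebra_simps)
  also have "\<dots> = c j" using assms(2) by simp
  finally show ?thesis .
qed

definition proj where
  "proj U e v = (\<Sum>i<dim U. (g (e i) (e i) * g v (e i)) *\<^sub>R e i)"

lemma proj_in:
  assumes "subspace U" "pseudo_orthonormal_basis g U e"
  shows "proj U e v \<in> U"
  unfolding proj_def using pob_props(1)[OF assms(2)] assms(1)
  by (intro subspace_sum) (auto simp: subspace_scale)

lemma proj_orth:
  assumes "subspace U" "pseudo_orthonormal_basis g U e" "u \<in> U"
  shows "g (v - proj U e v) u = 0"
proof (rule vanish_span)
  show "u \<in> span (e ` {..<dim U})" using pob_props(2)[OF assms(2)] assms(3) by simp
next
  fix b assume "b \<in> e ` {..<dim U}"
  then obtain j where j: "j < dim U" "b = e j" by auto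
  have "g (proj U e v) (e j) = (\<Sum>i<dim U. g (e i) (e i) * g v (e i) * g (e i) (e j))"
    unfolding proj_def by (simp add: glsum)
  also have "\<dots> = g v (e j)" by (rule pob_delta[OF assms(2) j(1)])
  finally show "g (v - proj U e v) b = 0" using j by simp
qed

lemma expansion:
  assumes "subspace U" "\<forall>x\<in>U. (\<forall>y\<in>U. g x y = 0) \<longrightarrow> x = 0"
    "pseudo_orthonormal_basis g U e" "v \<in> U"
  shows "v = proj U e v"
proof -
  have "v - proj U e v \<in> U" using assms proj_in by (simp add: subspace_diff)
  moreover have "\<forall>y\<in>U. g (v - proj U e v) y = 0" using proj_orth assms by blast
  ultimately have "v - proj U e v = 0" using assms(2) by blast
  then show ?thesis by simp
qed

lemma parseval:
  assumes "subspace U" "\<forall>x\<in>U. (\<forall>y\<in>U. g x y = 0) \<longrightarrow> x = 0"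
    "pseudo_orthonormal_basis g U e" "u \<in> U"
  shows "g u w = (\<Sum>i<dim U. g (e i) (e i) * g u (e i) * g (e i) w)"
proof -
  have "g u w = g (proj U e u) w" using expansion[OF assms] by simp
  also have "\<dots> = (\<Sum>i<dim U. g (e i) (e i) * g u (e i) * g (e i) w)"
    unfolding proj_def by (simp add: glsum)
  finally show ?thesis .
qed

lemma trace_J_invariant:
  assumes U: "subspace U" and JU: "\<forall>x\<in>U. J x \<in> U" and nd: "\<forall>x\<in>U. (\<forall>y\<in>U. g x y = 0) \<longrightarrow> x = 0"
    and e: "pseudo_orthonormal_basis g U e" and f: "pseudo_orthonormal_basis g U f"
  shows "(\<Sum>i<dim U. g (e i) (e i) * g (J (e i)) (e i)) = (\<Sum>j<dim U. g (f j) (f j) * g (J (f j)) (f j))"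
proof -
  have "(\<Sum>i<dim U. g (e i) (e i) * g (J (e i)) (e i)) =
    (\<Sum>i<dim U. g (e i) (e i) * (\<Sum>j<dim U. g (f j) (f j) * g (J (e i)) (f j) * g (f j) (e i)))"
    using parseval[OF U nd f] pob_props(1)[OF e] JU by (intro sum.cong refl) auto
  also have "\<dots> = (\<Sum>i<dim U. \<Sum>j<dim U. g (f j) (f j) * (g (e i) (e i) * g (J (f j)) (e i) * g (e i) (f j)))"
    by (simp add: sum_distrib_left gJ gsym[of "e _" "J (f _)"] gsym[of "f _" "e _"] mult_ac)
  also have "\<dots> = (\<Sum>j<dim U. g (f j) (f j) * (\<Sum>i<dim U. g (e i) (e i) * g (J (f j)) (e i) * g (e i) (f j)))"
    by (subst sum.swap) (simp add: sum_distrib_left)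
  also have "\<dots> = (\<Sum>j<dim U. g (f j) (f j) * g (J (f j)) (f j))"
    using parseval[OF U nd e] pob_props(1)[OF f] JU by (intro sum.cong refl) auto
  finally show ?thesis .
qed

end

theorem lemma2p5:
  fixes g :: "'v::euclidean_space \<Rightarrow> 'v \<Rightarrow> real" and J :: "'v \<Rightarrow> 'v"
    and W :: "'v set" and \<sigma> :: "'v \<Rightarrow> 'v \<Rightarrow> 'v" and n :: nat
  assumes "DIM('v) = 2 * n + 2"
    and "norden_space g J"
    and "holomorphic_nondeg_subspace g J W"
    and "dim W = 2 * n"
    and "second_fundamental_form g J W \<sigma>"
    and "\<exists>\<eta>. \<eta> \<noteq> 0 \<and> normal_to g W \<eta> \<and>
           (\<forall>x\<in>W. shape_operator g W \<sigma> \<eta> x =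
              (trace_on W (shape_operator g W \<sigma> \<eta>) / (2 * real n)) *\<^sub>R x
              - (trace_on W (shape_operator g W \<sigma> \<eta> \<circ> J) / (2 * real n)) *\<^sub>R J x)"
  shows "\<forall>x\<in>W. \<forall>y\<in>W. \<sigma> x y = g x y *\<^sub>R mean_curvature g W \<sigma>
                         - assoc_metric g J x y *\<^sub>R J (mean_curvature g W \<sigma>)"
proof -
  interpret nd g J by (rule nd.intro) (rule assms(2))
  have W: "subspace W" and JWe: "J ` W = W" and ndW: "\<forall>x\<in>W. (\<forall>y\<in>W. g x y = 0) \<longrightarrow> x = 0"
    using assms(3) unfolding holomorphic_nondeg_subspace_def by auto
  have JW: "\<forall>x\<in>W. J x \<in> W" using JWe by auto
  have bo: "bilinear_on W \<sigma>" and ssym: "\<forall>x\<in>W. \<forall>y\<in>W. \<sigma> x y = \<sigma> y x"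
    and snor: "\<forall>x\<in>W. \<forall>y\<in>W. normal_to g W (\<sigma> x y)"
    and sJ: "\<forall>x\<in>W. \<forall>y\<in>W. \<sigma> x (J y) = J (\<sigma> x y)"
    using assms(5) unfolding second_fundamental_form_def by auto
  have sig_add: "\<sigma> x (y1 + y2) = \<sigma> x y1 + \<sigma> x y2" if "x \<in> W" "y1 \<in> W" "y2 \<in> W" for x y1 y2
  proof -
    have "\<sigma> x (1 *\<^sub>R y1 + 1 *\<^sub>R y2) = 1 *\<^sub>R \<sigma> x y1 + 1 *\<^sub>R \<sigma> x y2"
      using bo that unfolding bilinear_on_def by blast
    then show ?thesis by simp
  qed
  have sig_scale: "\<sigma> x (c *\<^sub>R y) = c *\<^sub>R \<sigma> x y" if "x \<in> W" "y \<in> W" for x y c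
  proof -
    have "\<sigma> x (c *\<^sub>R y + 0 *\<^sub>R y) = c *\<^sub>R \<sigma> x y + 0 *\<^sub>R \<sigma> x y"
      using bo that unfolding bilinear_on_def by blast
    then show ?thesis by simp
  qed
  have sig0: "\<sigma> x 0 = 0" if "x \<in> W" for x
    using sig_scale[OF that subspace_0[OF W], of 0] by simp
  obtain \<eta> where eta0: "\<eta> \<noteq> 0" and etaN: "normal_to g W \<eta>" and Aeq:
    "\<forall>x\<in>W. shape_operator g W \<sigma> \<eta> x =
              (trace_on W (shape_operator g W \<sigma> \<eta>) / (2 * real n)) *\<^sub>R x
              - (trace_on W (shape_operator g W \<sigma> \<eta> \<circ> J) / (2 * real n)) *\<^sub>R J x"
    using assms(6) by blast
  define \<alpha> where "\<alpha> = trace_on W (shape_operator g W \<sigma> \<eta>) / (2 * real n)"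
  define \<beta> where "\<beta> = trace_on W (shape_operator g W \<sigma> \<eta> \<circ> J) / (2 * real n)"
  have A: "shape_operator g W \<sigma> \<eta> x = \<alpha> *\<^sub>R x - \<beta> *\<^sub>R J x" if "x \<in> W" for x
    using Aeq that unfolding \<alpha>_def \<beta>_def by blast
  show ?thesis
  proof (cases "n = 0")
    case True
    then have "W \<subseteq> {0}" using assms(4) by simp
    then have "x = 0" if "x \<in> W" for x using that by auto
    moreover have "\<sigma> 0 0 = 0" using sig0 subspace_0[OF W] by blast
    ultimately show ?thesis unfolding assoc_metric_def
    proof (intro ballI)
      fix x y assume "x \<in> W" "y \<in> W"
      moreover assume "\<And>x. x \<in> W \<Longrightarrow> x = 0" "\<sigma> 0 0 = 0"
      ultimately have "x = 0" "y = 0" "\<sigma> 0 0 = 0" by auto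
      then show "\<sigma> x y = g x y *\<^sub>R mean_curvature g W \<sigma> - g (J x) y *\<^sub>R J (mean_curvature g W \<sigma>)"
        by simp
    qed
  next
    case False
    then have n0: "n > 0" by simp
    obtain e0 where e0: "pseudo_orthonormal_basis g W e0" "\<forall>i<dim W. g (J (e0 i)) (e0 i) = 0"
      using adapted_pob[OF W JW ndW] by blast
    define e where "e = (SOME e. pseudo_orthonormal_basis g W e)"
    have e: "pseudo_orthonormal_basis g W e" unfolding e_def by (rule someI[of "pseudo_orthonormal_basis g W", OF e0(1)])
    have te: "(\<Sum>i<dim W. g (e i) (e i) * g (J (e i)) (e i)) = 0"
      using trace_J_invariant[OF W JW ndW e e0(1)] e0(2) by simp
    note eW = pob_props(1)[OF e] and esq = pob_props(4)[OF e]
    have Aprop: "g (shape_operator g W \<sigma> \<eta> x) y = g (\<sigma> x y) \<eta>" if x: "x \<in> W" and y: "y \<in> W" for x y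
    proof -
      define z where "z = (\<Sum>i<dim W. (g (e i) (e i) * g (\<sigma> x (e i)) \<eta>) *\<^sub>R e i)"
      have zW: "z \<in> W" unfolding z_def using eW W by (intro subspace_sum) (auto simp: subspace_scale)
      define T where "T = {y\<in>W. g (\<sigma> x y) \<eta> = g z y}"
      have "subspace T" unfolding T_def subspace_def
        using W sig_add[OF x] sig_scale[OF x] sig0[OF x]
        by (auto simp: subspace_0 subspace_add subspace_scale)
      moreover have "e ` {..<dim W} \<subseteq> T"
      proof
        fix b assume "b \<in> e ` {..<dim W}"
        then obtain j where j: "j < dim W" "b = e j" by auto
        have "g z (e j) = (\<Sum>i<dim W. g (e i) (e i) * g (\<sigma> x (e i)) \<eta> * g (e i) (e j))"
          unfolding z_def by (simp add: glsum)
        also have "\<dots> = g (\<sigma> x (e j)) \<eta>" by (rule pob_delta[OF e j(1)])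
        finally show "b \<in> T" unfolding T_def using j eW by auto
      qed
      ultimately have "span (e ` {..<dim W}) \<subseteq> T" by (rule span_minimal[rotated])
      then have zP: "\<forall>y\<in>W. g z y = g (\<sigma> x y) \<eta>" using pob_props(2)[OF e] unfolding T_def by auto
      have "shape_operator g W \<sigma> \<eta> x = z"
        unfolding shape_operator_def
      proof (rule the_equality)
        show "z \<in> W \<and> (\<forall>y\<in>W. g z y = g (\<sigma> x y) \<eta>)" using zW zP by blast
      next
        fix z' assume z': "z' \<in> W \<and> (\<forall>y\<in>W. g z' y = g (\<sigma> x y) \<eta>)"
        have "z' - z \<in> W" using z' zW W by (simp add: subspace_diff)
        moreover have "\<forall>y\<in>W. g (z' - z) y = 0" using z' zP by simp
        ultimately have "z' - z = 0" using ndW by blast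
        then show "z' = z" by simp
      qed
      then show ?thesis using zP y by simp
    qed
    have key1: "g (\<sigma> x y) \<eta> = \<alpha> * g x y - \<beta> * g (J x) y" if "x \<in> W" "y \<in> W" for x y
      using Aprop[OF that] A[OF that(1)] by simp
    have key2: "g (\<sigma> x y) (J \<eta>) = \<alpha> * g (J x) y + \<beta> * g x y" if x: "x \<in> W" and y: "y \<in> W" for x y
    proof -
      have "g (\<sigma> x y) (J \<eta>) = g (J (\<sigma> x y)) \<eta>" by (simp add: gJ)
      also have "\<dots> = g (\<sigma> x (J y)) \<eta>" using sJ x y by simp
      also have "\<dots> = \<alpha> * g x (J y) - \<beta> * g (J x) (J y)" using key1 x y JW by simp
      also have "\<dots> = \<alpha> * g (J x) y + \<beta> * g x y" by (simp add: gJ)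
      finally show ?thesis .
    qed
    define N where "N = {v. \<forall>x\<in>W. g v x = 0}"
    have N: "subspace N" unfolding N_def subspace_def by auto
    have JN: "J v \<in> N" if "v \<in> N" for v using that JW unfolding N_def by (simp add: gJ)
    have etaN': "\<eta> \<in> N" using etaN unfolding N_def normal_to_def by auto
    have JetaN: "J \<eta> \<in> N" using JN etaN' by blast
    have WN: "W \<inter> N = {0}"
    proof
      show "W \<inter> N \<subseteq> {0}" using ndW unfolding N_def by auto
      show "{0} \<subseteq> W \<inter> N" using subspace_0[OF W] subspace_0[OF N] by auto
    qed
    have decomp: "\<exists>w m. w \<in> W \<and> m \<in> N \<and> u = w + m" for u
    proof -
      have "proj W e u \<in> W" by (rule proj_in[OF W e])
      moreover have "u - proj W e u \<in> N" unfolding N_def using proj_orth[OF W e] by blast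
      ultimately show ?thesis by (intro exI[of _ "proj W e u"] exI[of _ "u - proj W e u"]) auto
    qed
    have "{x + y |x y. x \<in> W \<and> y \<in> N} = UNIV" using decomp by blast
    then have "dim (UNIV::'v set) + dim (W \<inter> N) = dim W + dim N"
      using dim_sums_Int[OF W N] by simp
    then have dN: "dim N = 2" using assms(1) assms(4) WN by simp
    have Jeta0: "J \<eta> \<noteq> 0" using eta0 by (metis JJ Jzero neg_equal_0_iff_equal)
    have nsp: "\<eta> \<notin> span {J \<eta>}"
    proof
      assume "\<eta> \<in> span {J \<eta>}"
      then obtain k where k: "\<eta> = k *\<^sub>R J \<eta>" by (auto simp: span_singleton)
      then have "J \<eta> = k *\<^sub>R J (J \<eta>)" by (metis Jmul)
      then have "J \<eta> = - k *\<^sub>R \<eta>" by simp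
      with k have "\<eta> = (- k * k) *\<^sub>R \<eta>" by simp
      then have "\<eta> + (k * k) *\<^sub>R \<eta> = 0" by (simp add: eq_neg_iff_add_eq_0)
      then have "(1 + k * k) *\<^sub>R \<eta> = 0" by (simp add: scaleR_add_left)
      moreover have "1 + k * k \<noteq> 0" using zero_le_square[of k] by linarith
      ultimately show False using eta0 by simp
    qed
    have ind: "independent {\<eta>, J \<eta>}"
      by (intro independent_insertI nsp) (auto intro!: independent_insertI independent_empty simp: Jeta0)
    have card2: "card {\<eta>, J \<eta>} = 2" using nsp span_base[of "J \<eta>" "{J \<eta>}"] by (cases "\<eta> = J \<eta>") auto
    have Nsp: "N \<subseteq> span {\<eta>, J \<eta>}"
      by (rule card_ge_dim_independent) (use etaN' JetaN ind card2 dN in auto)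
    have Nrep: "\<exists>a b. v = a *\<^sub>R \<eta> + b *\<^sub>R J \<eta>" if "v \<in> N" for v
    proof -
      have "v \<in> span (insert \<eta> {J \<eta>})" using Nsp that by auto
      then obtain a where "v - a *\<^sub>R \<eta> \<in> span {J \<eta>}" by (auto simp: span_insert)
      then obtain b where "v - a *\<^sub>R \<eta> = b *\<^sub>R J \<eta>" by (auto simp: span_singleton)
      then have "v = a *\<^sub>R \<eta> + b *\<^sub>R J \<eta>" by (simp add: algebra_simps)
      then show ?thesis by blast
    qed
    define P where "P = g \<eta> \<eta>"
    define Q where "Q = g \<eta> (J \<eta>)"
    have gJe: "g (J \<eta>) \<eta> = Q" unfolding Q_def by (simp add: gsym)
    have gJJe: "g (J \<eta>) (J \<eta>) = - P" unfolding P_def by simp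
    have Delta: "P * P + Q * Q \<noteq> 0"
    proof
      assume "P * P + Q * Q = 0"
      then have P0: "P = 0" and Q0: "Q = 0" by (simp_all add: sum_squares_eq_zero_iff)
      have "g \<eta> u = 0" for u
      proof -
        obtain w m where wm: "w \<in> W" "m \<in> N" "u = w + m" using decomp by blast
        obtain a b where ab: "m = a *\<^sub>R \<eta> + b *\<^sub>R J \<eta>" using Nrep[OF wm(2)] by blast
        have "g \<eta> w = 0" using etaN wm(1) unfolding normal_to_def by auto
        moreover have "g \<eta> m = 0" using P0 Q0 unfolding ab P_def Q_def by simp
        ultimately show ?thesis using wm(3) by simp
      qed
      then show False using nondeg eta0 by blast
    qed
    have Nzero: "v = 0" if v: "v \<in> N" and v1: "g v \<eta> = 0" and v2: "g v (J \<eta>) = 0" for v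
    proof -
      obtain a b where ab: "v = a *\<^sub>R \<eta> + b *\<^sub>R J \<eta>" using Nrep[OF v] by blast
      have e1: "a * P + b * Q = 0" using v1 gJe unfolding ab P_def by simp
      have e2: "a * Q - b * P = 0" using v2 gJJe unfolding ab Q_def by simp
      have "a * (P * P + Q * Q) = P * (a * P + b * Q) + Q * (a * Q - b * P)" by algebra
      also have "\<dots> = 0" using e1 e2 by simp
      finally have "a * (P * P + Q * Q) = 0" .
      then have "a = 0" using Delta by (simp only: mult_eq_0_iff) blast
      have "b * (P * P + Q * Q) = Q * (a * P + b * Q) - P * (a * Q - b * P)" by algebra
      also have "\<dots> = 0" using e1 e2 by simp
      finally have "b * (P * P + Q * Q) = 0" .
      then have "b = 0" using Delta by (simp only: mult_eq_0_iff) blast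
      show ?thesis using \<open>a = 0\<close> \<open>b = 0\<close> ab by simp
    qed
    define p where "p = (\<alpha> * P + \<beta> * Q) / (P * P + Q * Q)"
    define q where "q = (\<alpha> * Q - \<beta> * P) / (P * P + Q * Q)"
    define Z where "Z = p *\<^sub>R \<eta> + q *\<^sub>R J \<eta>"
    have ZN: "Z \<in> N" unfolding Z_def using N etaN' JetaN by (simp add: subspace_add subspace_scale)
    have JZN: "J Z \<in> N" using JN ZN by blast
    have gZe: "g Z \<eta> = \<alpha>"
    proof -
      have "g Z \<eta> = p * P + q * Q" unfolding Z_def using gJe by (simp add: P_def)
      also have "\<dots> = ((\<alpha> * P + \<beta> * Q) * P + (\<alpha> * Q - \<beta> * P) * Q) / (P * P + Q * Q)"
        unfolding p_def q_def by (simp only: times_divide_eq_left add_divide_distrib[symmetric])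
      also have "(\<alpha> * P + \<beta> * Q) * P + (\<alpha> * Q - \<beta> * P) * Q = \<alpha> * (P * P + Q * Q)" by algebra
      also have "\<alpha> * (P * P + Q * Q) / (P * P + Q * Q) = \<alpha>" using Delta by simp
      finally show ?thesis .
    qed
    have gZJe: "g Z (J \<eta>) = \<beta>"
    proof -
      have "g Z (J \<eta>) = p * Q - q * P" unfolding Z_def using gJJe by (simp add: Q_def)
      also have "\<dots> = ((\<alpha> * P + \<beta> * Q) * Q - (\<alpha> * Q - \<beta> * P) * P) / (P * P + Q * Q)"
        unfolding p_def q_def by (simp only: times_divide_eq_left diff_divide_distrib[symmetric])
      also have "(\<alpha> * P + \<beta> * Q) * Q - (\<alpha> * Q - \<beta> * P) * P = \<beta> * (P * P + Q * Q)" by algebra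
      also have "\<beta> * (P * P + Q * Q) / (P * P + Q * Q) = \<beta>" using Delta by simp
      finally show ?thesis .
    qed
    have main: "\<sigma> x y = g x y *\<^sub>R Z - g (J x) y *\<^sub>R J Z" if x: "x \<in> W" and y: "y \<in> W" for x y
    proof -
      define D where "D = \<sigma> x y - g x y *\<^sub>R Z + g (J x) y *\<^sub>R J Z"
      have sN: "\<sigma> x y \<in> N" using snor x y unfolding N_def normal_to_def by blast
      have DN: "D \<in> N" unfolding D_def using N sN ZN JZN
        by (simp add: subspace_add subspace_diff subspace_scale)
      have "g (J Z) \<eta> = \<beta>" using gZJe by (simp add: gJ)
      then have "g D \<eta> = 0" unfolding D_def using key1[OF x y] gZe by simp
      moreover have "g (J Z) (J \<eta>) = - \<alpha>" using gZe by simp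
      then have "g D (J \<eta>) = 0" unfolding D_def using key2[OF x y] gZJe by simp
      ultimately have "D = 0" using Nzero DN by blast
      then show ?thesis unfolding D_def by (simp add: algebra_simps)
    qed
    have tr: "trace_g g W \<sigma> = (\<Sum>i<dim W. g (e i) (e i) *\<^sub>R \<sigma> (e i) (e i))"
      by (simp add: trace_g_def e_def Let_def)
    also have "\<dots> = (\<Sum>i<dim W. (g (e i) (e i) * g (e i) (e i)) *\<^sub>R Z - (g (e i) (e i) * g (J (e i)) (e i)) *\<^sub>R J Z)"
      using main eW by (intro sum.cong refl) (simp add: scaleR_diff_right)
    also have "\<dots> = (\<Sum>i<dim W. g (e i) (e i) * g (e i) (e i)) *\<^sub>R Z - (\<Sum>i<dim W. g (e i) (e i) * g (J (e i)) (e i)) *\<^sub>R J Z"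
      by (simp add: sum_subtractf scaleR_sum_left)
    also have "(\<Sum>i<dim W. g (e i) (e i) * g (e i) (e i)) = (\<Sum>i<dim W. 1)"
      using esq by (intro sum.cong) auto
    finally have "trace_g g W \<sigma> = real (dim W) *\<^sub>R Z" using te by simp
    then have H: "mean_curvature g W \<sigma> = Z"
      unfolding mean_curvature_def using assms(4) n0 by simp
    show ?thesis using main by (simp add: H assoc_metric_def)
  qed
qed

end
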